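(* Let $\mathcal K^*$ be a reasonable ordered Fraïssé class in the language $L\cup\{<\}$ with $L$-reduct $\mathcal K$, and assume $G_{\mathcal K^*}$ is oligomorphic. If $G_{\mathcal K^*}$ is a normal subgroup of $G_\mathcal K$, then it has finite index in $G_\mathcal K$.
   Context: A Fraïssé class is a class of finite structures that is hereditary, has joint embedding and amalgamation, and contains arbitrarily large finite structures; $\mathrm{Flim}$ denotes the Fraïssé limit and $G_\mathcal K=\mathrm{Aut}(\mathrm{Flim}(\mathcal K))$. An ordered class $\mathcal K^*$ consists of structures $(A,<^A)$ with $<^A$ a linear order on an $L$-structure $A$ ($\mathcal K^*$-admissible orders); its $L$-reduct is $\{A:(A,<^A)\in\mathcal K^*\}$. $\mathcal K^*$ is reasonable if for all $A,B$ in the reduct, every embedding $a:A\to B$ and every admissible $<^A$ on $A$, there is an admissible $<^B$ on $B$ making $a$ an embedding $(A,<^A)\to(B,<^B)$. For reasonable $\mathcal K^*$ one has $\mathrm{Flim}(\mathcal K^* )=(\mathrm{Flim}(\mathcal K),<^* )$ for some linear order $<^*$, and $G_{\mathcal K^*}$ is thereby identified with the subgroup of $G_\mathcal K$ preserving $<^*$. A permutation group on $F$ is oligomorphic if for every $n$ its diagonal action on $F^n$ has finitely many orbits. *)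

theory Defs
  imports "HOL-Algebra.Bij" "HOL-Algebra.Coset" "HOL-Library.Countable_Set"
begin

text \<open>A language is given by a type of relation symbols with arities ra and a
type of function symbols with arities fa (constants are 0-ary functions). Only tuples of the right length from the
universe are ever relevant.\<close>

record ('a, 'r, 'f) struc =
  s_univ :: "'a set"
  s_rel  :: "'r \<Rightarrow> 'a list \<Rightarrow> bool"
  s_fns  :: "'f \<Rightarrow> 'a list \<Rightarrow> 'a"

definition closed_in :: "('f \<Rightarrow> nat) \<Rightarrow> ('a, 'r, 'f) struc \<Rightarrow> 'a set \<Rightarrow> bool" where
  "closed_in fa M S \<longleftrightarrow>
     (\<forall>f xs. length xs = fa f \<and> set xs \<subseteq> S \<longrightarrow> s_fns M f xs \<in> S)"

definition is_struc :: "('f \<Rightarrow> nat) \<Rightarrow> ('a, 'r, 'f) struc \<Rightarrow> bool" where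
  "is_struc fa A \<longleftrightarrow> closed_in fa A (s_univ A)"

definition embedding ::
  "('r \<Rightarrow> nat) \<Rightarrow> ('f \<Rightarrow> nat) \<Rightarrow> ('a, 'r, 'f) struc \<Rightarrow> ('a, 'r, 'f) struc \<Rightarrow> ('a \<Rightarrow> 'a) \<Rightarrow> bool" where
  "embedding ra fa A B h \<longleftrightarrow>
     inj_on h (s_univ A) \<and> h ` s_univ A \<subseteq> s_univ B \<and>
     (\<forall>r xs. length xs = ra r \<and> set xs \<subseteq> s_univ A \<longrightarrow>
        (s_rel B r (map h xs) \<longleftrightarrow> s_rel A r xs)) \<and>
     (\<forall>f xs. length xs = fa f \<and> set xs \<subseteq> s_univ A \<longrightarrow>
        h (s_fns A f xs) = s_fns B f (map h xs))"

definition isomorphism ::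
  "('r \<Rightarrow> nat) \<Rightarrow> ('f \<Rightarrow> nat) \<Rightarrow> ('a, 'r, 'f) struc \<Rightarrow> ('a, 'r, 'f) struc \<Rightarrow> ('a \<Rightarrow> 'a) \<Rightarrow> bool" where
  "isomorphism ra fa A B h \<longleftrightarrow> embedding ra fa A B h \<and> h ` s_univ A = s_univ B"

definition Aut :: "('r \<Rightarrow> nat) \<Rightarrow> ('f \<Rightarrow> nat) \<Rightarrow> ('a, 'r, 'f) struc \<Rightarrow> ('a \<Rightarrow> 'a) set" where
  "Aut ra fa M = {g \<in> Bij (s_univ M). isomorphism ra fa M M g}"

definition AutGrp :: "('r \<Rightarrow> nat) \<Rightarrow> ('f \<Rightarrow> nat) \<Rightarrow> ('a, 'r, 'f) struc \<Rightarrow> ('a \<Rightarrow> 'a) monoid" where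
  "AutGrp ra fa M = (BijGroup (s_univ M)) \<lparr>carrier := Aut ra fa M\<rparr>"

definition oligomorphic :: "'a set \<Rightarrow> ('a \<Rightarrow> 'a) set \<Rightarrow> bool" where
  "oligomorphic F G \<longleftrightarrow>
     (\<forall>n. finite ({xs. length xs = n \<and> set xs \<subseteq> F} //
                   {(xs, ys). \<exists>g\<in>G. map g xs = ys}))"

definition fraisse_class ::
  "('r \<Rightarrow> nat) \<Rightarrow> ('f \<Rightarrow> nat) \<Rightarrow> ('a, 'r, 'f) struc set \<Rightarrow> bool" where
  "fraisse_class ra fa K \<longleftrightarrow>
     \<comment> \<open>a class of finite structures\<close>
     (\<forall>A\<in>K. is_struc fa A \<and> finite (s_univ A)) \<and>
     \<comment> \<open>closed under isomorphism\<close>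
     (\<forall>A B h. A \<in> K \<and> is_struc fa B \<and> isomorphism ra fa A B h \<longrightarrow> B \<in> K) \<and>
     \<comment> \<open>hereditary\<close>
     (\<forall>A B h. A \<in> K \<and> is_struc fa B \<and> finite (s_univ B) \<and> embedding ra fa B A h \<longrightarrow> B \<in> K) \<and>
     \<comment> \<open>joint embedding\<close>
     (\<forall>A\<in>K. \<forall>B\<in>K. \<exists>C\<in>K. \<exists>f g. embedding ra fa A C f \<and> embedding ra fa B C g) \<and>
     \<comment> \<open>amalgamation\<close>
     (\<forall>A\<in>K. \<forall>B\<in>K. \<forall>C\<in>K. \<forall>f g. embedding ra fa A B f \<and> embedding ra fa A C g \<longrightarrow>
        (\<exists>D\<in>K. \<exists>f' g'. embedding ra fa B D f' \<and> embedding ra fa C D g' \<and>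
           (\<forall>x\<in>s_univ A. f' (f x) = g' (g x)))) \<and>
     \<comment> \<open>arbitrarily large finite structures\<close>
     (\<forall>n. \<exists>A\<in>K. n \<le> card (s_univ A))"

definition age :: "('r \<Rightarrow> nat) \<Rightarrow> ('f \<Rightarrow> nat) \<Rightarrow> ('a, 'r, 'f) struc \<Rightarrow> ('a, 'r, 'f) struc set" where
  "age ra fa M = {A. is_struc fa A \<and> finite (s_univ A) \<and> (\<exists>h. embedding ra fa A M h)}"

definition locally_finite :: "('f \<Rightarrow> nat) \<Rightarrow> ('a, 'r, 'f) struc \<Rightarrow> bool" where
  "locally_finite fa M \<longleftrightarrow>
     (\<forall>S. finite S \<and> S \<subseteq> s_univ M \<longrightarrow>
        (\<exists>T. S \<subseteq> T \<and> T \<subseteq> s_univ M \<and> finite T \<and> closed_in fa M T))"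

definition ultrahomogeneous :: "('r \<Rightarrow> nat) \<Rightarrow> ('f \<Rightarrow> nat) \<Rightarrow> ('a, 'r, 'f) struc \<Rightarrow> bool" where
  "ultrahomogeneous ra fa M \<longleftrightarrow>
     (\<forall>S T h. S \<subseteq> s_univ M \<and> T \<subseteq> s_univ M \<and> finite S \<and>
        closed_in fa M S \<and> closed_in fa M T \<and>
        isomorphism ra fa (M\<lparr>s_univ := S\<rparr>) (M\<lparr>s_univ := T\<rparr>) h \<longrightarrow>
        (\<exists>g\<in>Aut ra fa M. \<forall>x\<in>S. g x = h x))"

text \<open>M is (a copy of) the Fraisse limit of K: the countable ultrahomogeneous
(locally finite) structure whose age is K. Fraisse limits are unique up to
isomorphism, so this characterises Flim(K).\<close>

definition is_Flim ::
  "('r \<Rightarrow> nat) \<Rightarrow> ('f \<Rightarrow> nat) \<Rightarrow> ('a, 'r, 'f) struc set \<Rightarrow> ('a, 'r, 'f) struc \<Rightarrow> bool" where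
  "is_Flim ra fa K M \<longleftrightarrow>
     is_struc fa M \<and> countable (s_univ M) \<and> locally_finite fa M \<and>
     ultrahomogeneous ra fa M \<and> age ra fa M = K"

text \<open>The relation symbols of L \<union> {<} are 'r option: None is the binary symbol <.\<close>

definition ord_ar :: "('r \<Rightarrow> nat) \<Rightarrow> 'r option \<Rightarrow> nat" where
  "ord_ar ra s = (case s of None \<Rightarrow> 2 | Some r \<Rightarrow> ra r)"

definition reduct :: "('a, 'r option, 'f) struc \<Rightarrow> ('a, 'r, 'f) struc" where
  "reduct A = \<lparr>s_univ = s_univ A, s_rel = (\<lambda>r. s_rel A (Some r)), s_fns = s_fns A\<rparr>"

definition ord_of :: "('a, 'r option, 'f) struc \<Rightarrow> 'a \<Rightarrow> 'a \<Rightarrow> bool" where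
  "ord_of A x y = s_rel A None [x, y]"

definition expand :: "('a, 'r, 'f) struc \<Rightarrow> ('a \<Rightarrow> 'a \<Rightarrow> bool) \<Rightarrow> ('a, 'r option, 'f) struc" where
  "expand M lt = \<lparr>s_univ = s_univ M,
     s_rel = (\<lambda>s xs. case s of None \<Rightarrow> lt (xs ! 0) (xs ! 1) | Some r \<Rightarrow> s_rel M r xs),
     s_fns = s_fns M\<rparr>"

definition strict_linear_order_on :: "'a set \<Rightarrow> ('a \<Rightarrow> 'a \<Rightarrow> bool) \<Rightarrow> bool" where
  "strict_linear_order_on U lt \<longleftrightarrow>
     (\<forall>x\<in>U. \<not> lt x x) \<and>
     (\<forall>x\<in>U. \<forall>y\<in>U. \<forall>z\<in>U. lt x y \<and> lt y z \<longrightarrow> lt x z) \<and>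
     (\<forall>x\<in>U. \<forall>y\<in>U. x \<noteq> y \<longrightarrow> lt x y \<or> lt y x)"

definition ordered_class :: "('a, 'r option, 'f) struc set \<Rightarrow> bool" where
  "ordered_class Ks \<longleftrightarrow> (\<forall>A\<in>Ks. strict_linear_order_on (s_univ A) (ord_of A))"

definition reasonable ::
  "('r \<Rightarrow> nat) \<Rightarrow> ('f \<Rightarrow> nat) \<Rightarrow> ('a, 'r option, 'f) struc set \<Rightarrow> bool" where
  "reasonable ra fa Ks \<longleftrightarrow>
     (\<forall>A B a As. A \<in> reduct ` Ks \<and> B \<in> reduct ` Ks \<and> embedding ra fa A B a \<and>
        As \<in> Ks \<and> reduct As = A \<longrightarrow>
        (\<exists>Bs\<in>Ks. reduct Bs = B \<and> embedding (ord_ar ra) fa As Bs a))"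

end

theory Submission
  imports Defs
begin

lemma AutGrp_carrier: "carrier (AutGrp ra fa M) = Aut ra fa M"
  by (simp add: AutGrp_def)

lemma AutGrp_mult: "x \<in> Aut ra fa M \<Longrightarrow> y \<in> Aut ra fa M \<Longrightarrow> x \<otimes>\<^bsub>AutGrp ra fa M\<^esub> y = compose (s_univ M) x y"
  by (simp add: AutGrp_def BijGroup_def Aut_def)

lemma AutGrp_mult_app: "x \<in> Aut ra fa M \<Longrightarrow> y \<in> Aut ra fa M \<Longrightarrow> z \<in> s_univ M \<Longrightarrow> (x \<otimes>\<^bsub>AutGrp ra fa M\<^esub> y) z = x (y z)"
  unfolding AutGrp_mult[of x ra fa M y] compose_def by simp

lemma Aut_ord_pres:
  assumes "h \<in> Aut (ord_ar ra) fa (expand M lt)" "x \<in> s_univ M" "y \<in> s_univ M"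
  shows "lt (h x) (h y) = lt x y"
proof -
  have "embedding (ord_ar ra) fa (expand M lt) (expand M lt) h"
    using assms(1) by (simp add: Aut_def isomorphism_def)
  then have "\<forall>r xs. length xs = ord_ar ra r \<and> set xs \<subseteq> s_univ (expand M lt) \<longrightarrow>
        (s_rel (expand M lt) r (map h xs) \<longleftrightarrow> s_rel (expand M lt) r xs)"
    unfolding embedding_def by blast
  then have "length [x,y] = ord_ar ra None \<and> set [x,y] \<subseteq> s_univ (expand M lt) \<longrightarrow>
        (s_rel (expand M lt) None (map h [x,y]) \<longleftrightarrow> s_rel (expand M lt) None [x,y])"
    by blast
  then have "s_rel (expand M lt) None (map h [x,y]) = s_rel (expand M lt) None [x,y]"
    using assms(2,3) by (simp add: ord_ar_def expand_def)
  then show ?thesis by (simp add: expand_def)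
qed

lemma Aut_surj: "g \<in> Aut ra fa M \<Longrightarrow> g ` s_univ M = s_univ M"
  by (simp add: Aut_def Bij_def bij_betw_def)

lemma Aut_ordI:
  assumes "g \<in> Aut ra fa M" "\<forall>x\<in>s_univ M. \<forall>y\<in>s_univ M. lt (g x) (g y) = lt x y"
  shows "g \<in> Aut (ord_ar ra) fa (expand M lt)"
proof -
  have b: "g \<in> Bij (s_univ M)" and e: "embedding ra fa M M g" and s: "g ` s_univ M = s_univ M"
    using assms(1) by (auto simp: Aut_def isomorphism_def)
  have e1: "inj_on g (s_univ M)" using e unfolding embedding_def by blast
  have e2: "\<And>r xs. length xs = ra r \<Longrightarrow> set xs \<subseteq> s_univ M \<Longrightarrow>
        (s_rel M r (map g xs) \<longleftrightarrow> s_rel M r xs)" using e unfolding embedding_def by blast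
  have e3: "\<And>f xs. length xs = fa f \<Longrightarrow> set xs \<subseteq> s_univ M \<Longrightarrow>
        g (s_fns M f xs) = s_fns M f (map g xs)" using e unfolding embedding_def by blast
  have U: "s_univ (expand M lt) = s_univ M" by (simp add: expand_def)
  have rel: "s_rel (expand M lt) r (map g xs) = s_rel (expand M lt) r xs"
    if a: "length xs = ord_ar ra r" "set xs \<subseteq> s_univ M" for r xs
  proof (cases r)
    case None
    then have "length xs = 2" using a by (simp add: ord_ar_def)
    then obtain x y where xs: "xs = [x,y]"
      by (auto simp: numeral_2_eq_2 length_Suc_conv)
    have "x \<in> s_univ M" "y \<in> s_univ M" using a(2) xs by auto
    then show ?thesis using assms(2) None xs by (simp add: expand_def)
  next
    case (Some r')
    have "length xs = ra r'" using a Some by (simp add: ord_ar_def)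
    then show ?thesis using e2[of xs r'] a(2) Some by (simp add: expand_def)
  qed
  have fns: "s_fns (expand M lt) = s_fns M" by (simp add: expand_def)
  have "embedding (ord_ar ra) fa (expand M lt) (expand M lt) g"
    unfolding embedding_def U fns using e1 s rel e3 by blast
  then show ?thesis unfolding Aut_def isomorphism_def U using b s by blast
qed

lemma finite_image_factor:
  assumes "finite (R ` A)" "\<And>x y. x \<in> A \<Longrightarrow> y \<in> A \<Longrightarrow> R x = R y \<Longrightarrow> f x = f y"
  shows "finite (f ` A)"
proof -
  define k where "k r = f (SOME g. g \<in> A \<and> R g = r)" for r
  have "f ` A \<subseteq> k ` (R ` A)"
  proof
    fix z assume "z \<in> f ` A"
    then obtain g where g: "g \<in> A" "z = f g" by blast
    define g' where "g' = (SOME g'. g' \<in> A \<and> R g' = R g)"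
    have ex: "\<exists>g'. g' \<in> A \<and> R g' = R g" using g by blast
    have "g' \<in> A \<and> R g' = R g" unfolding g'_def by (rule someI_ex[OF ex])
    then have "f g' = f g" using assms(2)[of g' g] g(1) by simp
    then have "k (R g) = z" using g(2) by (simp add: k_def g'_def)
    then show "z \<in> k ` (R ` A)" using g by blast
  qed
  moreover have "finite (k ` (R ` A))" using assms(1) by (rule finite_imageI)
  ultimately show ?thesis by (rule finite_subset)
qed

theorem mainTheorem17:
  fixes ra :: "'r \<Rightarrow> nat" and fa :: "'f \<Rightarrow> nat"
    and Ks :: "('a, 'r option, 'f) struc set"
    and M :: "('a, 'r, 'f) struc" and lt :: "'a \<Rightarrow> 'a \<Rightarrow> bool"
  assumes "fraisse_class (ord_ar ra) fa Ks"
    and "ordered_class Ks"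
    and "reasonable ra fa Ks"
    and "is_Flim ra fa (reduct ` Ks) M"
    and "is_Flim (ord_ar ra) fa Ks (expand M lt)"
    and "oligomorphic (s_univ M) (Aut (ord_ar ra) fa (expand M lt))"
    and "Aut (ord_ar ra) fa (expand M lt) \<lhd> AutGrp ra fa M"
  shows "finite (rcosets\<^bsub>AutGrp ra fa M\<^esub> (Aut (ord_ar ra) fa (expand M lt)))"
proof -
  define G where "G = AutGrp ra fa M"
  define H where "H = Aut (ord_ar ra) fa (expand M lt)"
  define U where "U = s_univ M"
  have nH: "normal H G" using assms(7) by (simp add: G_def H_def)
  then interpret normal H G .
  have cG: "carrier G = Aut ra fa M" by (simp add: G_def AutGrp_carrier)
  have app: "\<And>x y z. x \<in> carrier G \<Longrightarrow> y \<in> carrier G \<Longrightarrow> z \<in> U \<Longrightarrow> (x \<otimes>\<^bsub>G\<^esub> y) z = x (y z)"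
    by (simp add: G_def U_def AutGrp_mult_app AutGrp_carrier)
  have pres: "\<And>h x y. h \<in> H \<Longrightarrow> x \<in> U \<Longrightarrow> y \<in> U \<Longrightarrow> lt (h x) (h y) = lt x y"
    by (simp add: H_def U_def Aut_ord_pres)
  have gU: "\<And>g x. g \<in> carrier G \<Longrightarrow> x \<in> U \<Longrightarrow> g x \<in> U"
    using Aut_surj cG U_def by blast
  define R where "R g = {(x,y). x \<in> U \<and> y \<in> U \<and> lt (g x) (g y)}" for g
  have inv: "lt (g (h x)) (g (h y)) = lt (g x) (g y)"
    if "g \<in> carrier G" "h \<in> H" "x \<in> U" "y \<in> U" for g h x y
  proof -
    define h' where "h' = g \<otimes>\<^bsub>G\<^esub> h \<otimes>\<^bsub>G\<^esub> inv\<^bsub>G\<^esub> g"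
    have h': "h' \<in> H" using inv_op_closed2 that by (simp add: h'_def)
    have hc: "h \<in> carrier G" using that subset by blast
    have "h' \<otimes>\<^bsub>G\<^esub> g = g \<otimes>\<^bsub>G\<^esub> h" unfolding h'_def using that hc
      by (simp add: m_assoc)
    moreover have "h' \<in> carrier G" using h' subset by blast
    ultimately have "\<And>z. z \<in> U \<Longrightarrow> h' (g z) = g (h z)"
    proof -
      fix z assume z: "z \<in> U"
      assume e: "h' \<otimes>\<^bsub>G\<^esub> g = g \<otimes>\<^bsub>G\<^esub> h" and hc': "h' \<in> carrier G"
      have "h' (g z) = (h' \<otimes>\<^bsub>G\<^esub> g) z" using app[OF hc' that(1) z] by simp
      also have "\<dots> = (g \<otimes>\<^bsub>G\<^esub> h) z" using e by simp
      also have "\<dots> = g (h z)" using app[OF that(1) hc z] by simp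
      finally show "h' (g z) = g (h z)" .
    qed
    then show ?thesis using pres[OF h' gU gU] that by metis
  qed
  define E where "E = {(xs, ys). \<exists>g\<in>H. map g xs = ys}"
  define Orb where "Orb = {xs. length xs = 2 \<and> set xs \<subseteq> U} // E"
  have fO: "finite Orb" using assms(6) by (simp add: oligomorphic_def Orb_def E_def H_def U_def)
  define F where "F S = {(x,y). x \<in> U \<and> y \<in> U \<and> (\<exists>c\<in>S. [x,y] \<in> c)}" for S
  have RF: "R g \<in> F ` Pow Orb" if g: "g \<in> carrier G" for g
  proof -
    define S where "S = {c \<in> Orb. \<forall>xs\<in>c. lt (g (xs!0)) (g (xs!1))}"
    have sub1: "R g \<subseteq> F S"
    proof
      fix p assume "p \<in> R g"
      then obtain x y where p: "p = (x,y)" "x \<in> U" "y \<in> U" "lt (g x) (g y)"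
        by (auto simp: R_def)
      define c where "c = E `` {[x,y]}"
      have cO: "c \<in> Orb" unfolding Orb_def c_def using p by (intro quotientI) auto
      have "\<one>\<^bsub>G\<^esub> \<in> H" by (rule subgroup.one_closed[OF is_subgroup])
      moreover have "\<one>\<^bsub>G\<^esub> = (\<lambda>z\<in>U. z)" by (simp add: G_def AutGrp_def BijGroup_def U_def)
      ultimately have xyc: "[x,y] \<in> c" using p by (auto simp: c_def E_def intro!: bexI[of _ "\<one>\<^bsub>G\<^esub>"])
      have "\<forall>xs\<in>c. lt (g (xs!0)) (g (xs!1))"
      proof
        fix xs assume "xs \<in> c"
        then obtain h where "h \<in> H" "xs = [h x, h y]" by (auto simp: c_def E_def)
        then show "lt (g (xs!0)) (g (xs!1))" using inv[OF g _ p(2,3)] p(4) by simp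
      qed
      then have "c \<in> S" unfolding S_def using cO by blast
      then show "p \<in> F S" using p xyc by (auto simp: F_def)
    qed
    have sub2: "F S \<subseteq> R g"
    proof
      fix p assume "p \<in> F S"
      then show "p \<in> R g" by (auto simp: F_def S_def R_def)
    qed
    have "R g = F S" using sub1 sub2 by (rule subset_antisym)
    moreover have "S \<in> Pow Orb" by (auto simp: S_def)
    ultimately show ?thesis by blast
  qed
  have fR: "finite (R ` carrier G)"
    by (rule finite_subset[of _ "F ` Pow Orb"]) (use RF fO in auto)
  have eq: "H #>\<^bsub>G\<^esub> g1 = H #>\<^bsub>G\<^esub> g2"
    if g1: "g1 \<in> carrier G" and g2: "g2 \<in> carrier G" and R: "R g1 = R g2" for g1 g2
  proof -
    define h where "h = g1 \<otimes>\<^bsub>G\<^esub> inv\<^bsub>G\<^esub> g2"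
    have hc: "h \<in> carrier G" using g1 g2 by (simp add: h_def)
    have hg: "h \<otimes>\<^bsub>G\<^esub> g2 = g1" using g1 g2 by (simp add: h_def m_assoc)
    have "\<forall>x\<in>U. \<forall>y\<in>U. lt (h x) (h y) = lt x y"
    proof (intro ballI)
      fix x y assume xy: "x \<in> U" "y \<in> U"
      have sU: "g2 ` U = U" using Aut_surj g2 cG U_def by blast
      obtain x' y' where x': "x' \<in> U" "x = g2 x'" and y': "y' \<in> U" "y = g2 y'"
        using xy sU by blast
      have "h x = g1 x'" "h y = g1 y'" using app[OF hc g2 x'(1)] app[OF hc g2 y'(1)] hg x' y'
        by auto
      moreover have "lt (g1 x') (g1 y') = lt (g2 x') (g2 y')"
        proof -
        have "(x',y') \<in> R g1 \<longleftrightarrow> (x',y') \<in> R g2" using R by simp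
        then show ?thesis using x'(1) y'(1) by (simp add: R_def)
      qed
      ultimately show "lt (h x) (h y) = lt x y" using x' y' by simp
    qed
    moreover have "h \<in> Aut ra fa M" using hc cG by simp
    ultimately have "h \<in> H" unfolding H_def using Aut_ordI[of h ra fa M lt] U_def by blast
    then have "g1 \<in> H #>\<^bsub>G\<^esub> g2" using hg by (auto simp: r_coset_def)
    then show ?thesis using repr_independence[OF _ g2 is_subgroup] by simp
  qed
  have "finite ((\<lambda>g. H #>\<^bsub>G\<^esub> g) ` carrier G)"
    by (rule finite_image_factor[OF fR eq])
  then show ?thesis unfolding RCOSETS_def G_def H_def by (simp add: UNION_singleton_eq_range)
qed

end
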